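(* Let $R_\bullet$ and $\omega_q,(\omega_q)_j$ be as in the context, and let $(\mu,\nu)$ be a $(p,q)$-shuffle. Then for $1\le j\le q$ one has $s_\mu(y_j)=y_{\nu_j+1}$ in $R_{p+q}$, and hence in $\Omega(R_{p+q})$ $$s_\mu(\omega_q)=\prod_{t\in\{\nu_1,\dots,\nu_q\}}{\bf d}y_{t+1},\qquad s_\mu((\omega_q)_j)=\prod_{t\in\{\nu_1,\dots,\widehat{\nu_j},\dots,\nu_q\}}{\bf d}y_{t+1}.$$
   Context: Fix $n\ge1$, $|x|\ge1$. $R_\bullet$ is the simplicial graded $\mathbb{F}_2$-algebra with $R_q=\mathbb{F}_2[x,y_1,\dots,y_q]$, $|y_i|=(n+1)|x|$, with algebra face and degeneracy maps $s_i(x)=x$, $d_i(x)=x$, $s_i(y_j)=y_j$ if $i\ge j$, $s_i(y_j)=y_{j+1}$ if $i<j$; $d_i(y_j)=x^{n+1}$ if $i=0,j=1$; $d_i(y_j)=y_{j-1}$ if $i<j,j>1$; $d_i(y_j)=y_j$ if $i\ge j,j<q$; $d_q(y_q)=0$. $\Omega$ denotes the de Rham complex functor (free $A$-algebra on ${\bf d}a$, $a\in A$, modulo additivity, Leibniz rule and $({\bf d}a)^2=0$), applied degreewise. $\omega_q={\bf d}y_1\cdots{\bf d}y_q$ and $(\omega_q)_j$ is $\omega_q$ with ${\bf d}y_j$ omitted. A $(p,q)$-shuffle $(\mu,\nu)$ consists of two increasing sequences $\mu_1<\dots<\mu_p$ and $\nu_1<\dots<\nu_q$ whose union is $\{0,1,\dots,p+q-1\}$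 (disjointly), and $s_\mu=s_{\mu_p}\cdots s_{\mu_1}:R_q\to R_{p+q}$ (extended to $\Omega$). *)

theory Defs
  imports "HOL-Library.Poly_Mapping" "HOL-Library.Z2"
begin

text \<open>Generators: the polynomial generators x, y_1, y_2, ... and their de Rham
differentials dx, dy_1, dy_2, ...  All rings in the simplicial object R are
polynomial rings over F_2 (type bit) in some of these variables; the
de Rham complex Omega(F_2[x,y_1,...,y_m]) is F_2[x,y_i,dx,dy_i] modulo
the ideal generated by the squares of the differentials (characteristic 2, so
graded commutativity is plain commutativity).\<close>

datatype var = X | Y nat | DX | DY nat

type_synonym poly = "(var \<Rightarrow>\<^sub>0 nat) \<Rightarrow>\<^sub>0 bit"

definition Var :: "var \<Rightarrow> poly" where
  "Var v = Poly_Mapping.single (Poly_Mapping.single v 1) 1"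

abbreviation dY :: "nat \<Rightarrow> poly" where
  "dY i \<equiv> Var (DY i)"

definition subst :: "(var \<Rightarrow> poly) \<Rightarrow> poly \<Rightarrow> poly" where
  "subst \<sigma> p = sum (\<lambda>mon. Poly_Mapping.single 0 (Poly_Mapping.lookup p mon) *
        prod (\<lambda>v. \<sigma> v ^ Poly_Mapping.lookup mon v) (Poly_Mapping.keys mon))
      (Poly_Mapping.keys p)"

fun svar :: "nat \<Rightarrow> var \<Rightarrow> var" where
  "svar i X = X"
| "svar i DX = DX"
| "svar i (Y j) = (if j \<le> i then Y j else Y (Suc j))"
| "svar i (DY j) = (if j \<le> i then DY j else DY (Suc j))"

definition degen :: "nat \<Rightarrow> poly \<Rightarrow> poly" where
  "degen i = subst (\<lambda>v. Var (svar i v))"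

text \<open>s_mu = s_(mu_p) o ... o s_(mu_1), for mu = [mu_1, ..., mu_p].\<close>
definition s_mu :: "nat list \<Rightarrow> poly \<Rightarrow> poly" where
  "s_mu mu = fold (\<lambda>i f. degen i \<circ> f) mu id"

definition is_shuffle :: "nat \<Rightarrow> nat \<Rightarrow> nat list \<Rightarrow> nat list \<Rightarrow> bool" where
  "is_shuffle p q mu nu \<longleftrightarrow> length mu = p \<and> length nu = q \<and>
     sorted_wrt (<) mu \<and> sorted_wrt (<) nu \<and> set mu \<inter> set nu = {} \<and>
     set mu \<union> set nu = {0..<p+q}"

definition omega :: "nat \<Rightarrow> poly" where
  "omega q = (\<Prod>i\<in>{1..q}. dY i)"

definition omega_hat :: "nat \<Rightarrow> nat \<Rightarrow> poly" where
  "omega_hat q j = (\<Prod>i\<in>{1..q} - {j}. dY i)"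

fun is_dvar :: "var \<Rightarrow> bool" where
  "is_dvar DX = True" | "is_dvar (DY _) = True" | "is_dvar _ = False"

definition dsq_ideal :: "poly set" where
  "dsq_ideal = {r. \<exists>V a. finite V \<and> (\<forall>v\<in>V. is_dvar v) \<and>
                        r = (\<Sum>v\<in>V. a v * Var v ^ 2)}"

definition omega_eq :: "poly \<Rightarrow> poly \<Rightarrow> bool" where
  "omega_eq a b \<longleftrightarrow> a - b \<in> dsq_ideal"

end

theory Submission imports Defs begin

lemma prod_Var_single:
  assumes "finite A"
  shows "(\<Prod>v\<in>A. Var v) = Poly_Mapping.single (\<Sum>v\<in>A. Poly_Mapping.single v (1::nat)) (1::bit)"
  using assms
proof (induction A rule: finite_induct)
  case empty then show ?case by simp
next
  case (insert a A)
  then show ?case by (simp add: Var_def mult_single)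
qed

lemma lookup_sum_single:
  assumes "finite A"
  shows "Poly_Mapping.lookup (\<Sum>v\<in>A. Poly_Mapping.single v (1::nat)) w = (if w \<in> A then 1 else 0)"
  using assms by (simp add: lookup_sum lookup_single when_def)

lemma keys_sum_single:
  assumes "finite A"
  shows "Poly_Mapping.keys (\<Sum>v\<in>A. Poly_Mapping.single v (1::nat)) = A"
  apply (rule set_eqI)
  apply (subst in_keys_iff)
  apply (subst lookup_sum_single[OF assms])
  by simp

lemma subst_prod_Var:
  assumes "finite A"
  shows "subst \<sigma> (\<Prod>v\<in>A. Var v) = (\<Prod>v\<in>A. \<sigma> v)"
proof -
  define m where "m = (\<Sum>v\<in>A. Poly_Mapping.single v (1::nat))"
  have k: "Poly_Mapping.keys m = A" unfolding m_def by (rule keys_sum_single[OF assms])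
  have l: "\<And>v. v \<in> A \<Longrightarrow> Poly_Mapping.lookup m v = 1"
    unfolding m_def using lookup_sum_single[OF assms] by presburger
  have "subst \<sigma> (\<Prod>v\<in>A. Var v) = subst \<sigma> (Poly_Mapping.single m 1)"
    using prod_Var_single[OF assms] m_def by simp
  also have "\<dots> = (\<Prod>v\<in>Poly_Mapping.keys m. \<sigma> v ^ Poly_Mapping.lookup m v)"
    by (simp add: subst_def)
  also have "\<dots> = (\<Prod>v\<in>A. \<sigma> v)"
    unfolding k by (rule prod.cong) (simp_all add: l)
  finally show ?thesis .
qed

lemma subst_prod_Var_inj:
  assumes "finite A" "inj_on \<phi> A"
  shows "subst \<sigma> (\<Prod>v\<in>A. Var (\<phi> v)) = (\<Prod>v\<in>A. \<sigma> (\<phi> v))"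
proof -
  have "(\<Prod>v\<in>A. Var (\<phi> v)) = (\<Prod>v\<in>\<phi> ` A. Var v)" using assms by (simp add: prod.reindex)
  moreover have "(\<Prod>v\<in>A. \<sigma> (\<phi> v)) = (\<Prod>v\<in>\<phi> ` A. \<sigma> v)" using assms by (simp add: prod.reindex)
  ultimately show ?thesis using assms by (simp add: subst_prod_Var)
qed

lemma inj_svar: "inj (svar i)"
proof (rule injI)
  fix x y assume "svar i x = svar i y" then show "x = y"
    by (cases x; cases y) (auto split: if_splits)
qed

lemma inj_fold_svar: "inj (\<lambda>v. fold svar mu v)"
proof (induction mu rule: rev_induct)
  case Nil then show ?case by simp
next
  case (snoc x xs)
  have "(\<lambda>v. fold svar (xs @ [x]) v) = svar x \<circ> (\<lambda>v. fold svar xs v)"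
    by (simp add: fun_eq_iff)
  then show ?case using inj_svar[of x] snoc by (simp add: inj_compose)
qed

lemma s_mu_snoc: "s_mu (xs @ [x]) = degen x \<circ> s_mu xs"
  by (simp add: s_mu_def)

lemma s_mu_prod:
  assumes "finite A"
  shows "s_mu mu (\<Prod>v\<in>A. Var v) = (\<Prod>v\<in>A. Var (fold svar mu v))"
proof (induction mu rule: rev_induct)
  case Nil then show ?case by (simp add: s_mu_def)
next
  case (snoc x xs)
  have "s_mu (xs @ [x]) (\<Prod>v\<in>A. Var v) = degen x (\<Prod>v\<in>A. Var (fold svar xs v))"
    using snoc by (simp only: s_mu_snoc comp_apply)
  also have "\<dots> = (\<Prod>v\<in>A. Var (svar x (fold svar xs v)))"
    unfolding degen_def using assms inj_fold_svar[of xs]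
    by (subst subst_prod_Var_inj) (auto intro: inj_on_subset)
  finally show ?case by (simp only: fold_append fold_Cons fold_Nil comp_apply id_apply)
qed


definition sv :: "nat \<Rightarrow> nat \<Rightarrow> nat" where
  "sv i k = (if k \<le> i then k else Suc k)"

lemma fold_svar_Y: "fold svar mu (Y k) = Y (fold sv mu k)"
  by (induction mu arbitrary: k) (simp_all add: sv_def)

lemma fold_svar_DY: "fold svar mu (DY k) = DY (fold sv mu k)"
  by (induction mu arbitrary: k) (simp_all add: sv_def)

lemma fold_sv_Suc: "fold sv (map Suc xs) (Suc k) = Suc (fold sv xs k)"
  by (induction xs arbitrary: k) (simp_all add: sv_def)

lemma fold_sv_fix: "\<forall>i\<in>set xs. k \<le> i \<Longrightarrow> fold sv xs k = k"
  by (induction xs) (simp_all add: sv_def)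

lemma map_Suc_ex: "\<forall>x\<in>set xs. 0 < x \<Longrightarrow> \<exists>ys. xs = map Suc ys"
proof (induction xs)
  case Nil then show ?case by simp
next
  case (Cons a xs)
  then obtain ys where "xs = map Suc ys" by auto
  moreover obtain b where "a = Suc b" using Cons.prems by (cases a) auto
  ultimately have "a # xs = map Suc (b # ys)" by simp
  then show ?case by (rule exI)
qed

lemma ins0:
  assumes "insert 0 S = {0..<Suc n}" "0 \<notin> S"
  shows "S = {1..<Suc (n::nat)}"
proof -
  have "S = {0..<Suc n} - {0}" using assms by blast
  also have "\<dots> = {1..<Suc n}" by auto
  finally show ?thesis .
qed

lemma shift_shuffle:
  assumes "sorted_wrt (<) (map Suc mu)" "sorted_wrt (<) (map Suc nu)"
    "set (map Suc mu) \<inter> set (map Suc nu) = {}"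
    "set (map Suc mu) \<union> set (map Suc nu) = {1..<Suc n}"
  shows "sorted_wrt (<) mu" "sorted_wrt (<) nu" "set mu \<inter> set nu = {}"
    "set mu \<union> set nu = {0..<n}"
proof -
  show "sorted_wrt (<) mu" "sorted_wrt (<) nu" using assms(1,2) by (simp_all add: sorted_wrt_map)
  show "set mu \<inter> set nu = {}" using assms(3) by auto
  have e: "Suc ` {0..<n} = {1..<Suc n}" by (simp add: image_Suc_atLeastLessThan)
  have "Suc ` (set mu \<union> set nu) = Suc ` {0..<n}"
    using assms(4) unfolding e by (simp only: set_map image_Un)
  then show "set mu \<union> set nu = {0..<n}" by (metis inj_Suc inj_image_eq_iff)
qed

lemma comb:
  "sorted_wrt (<) mu \<Longrightarrow> sorted_wrt (<) nu \<Longrightarrow> set mu \<inter> set nu = {} \<Longrightarrow>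
   set mu \<union> set nu = {0..<n} \<Longrightarrow> 1 \<le> j \<Longrightarrow> j \<le> length nu \<Longrightarrow>
   fold sv mu j = nu ! (j - 1) + 1"
proof (induction n arbitrary: mu nu j)
  case 0
  then show ?case by auto
next
  case (Suc n)
  have "0 \<in> set mu \<union> set nu" using Suc.prems(4) by auto
  then show ?case
  proof
    assume "0 \<in> set mu"
    then obtain mu' where mu: "mu = 0 # mu'"
      using Suc.prems(1) by (cases mu) auto
    have pos1: "\<forall>x\<in>set mu'. 0 < x" using Suc.prems(1) mu by auto
    have pos2: "\<forall>x\<in>set nu. 0 < x" using Suc.prems(3) mu by (auto intro: gr0I)
    obtain a where a: "mu' = map Suc a" using map_Suc_ex[OF pos1] by blast
    obtain b where b: "nu = map Suc b" using map_Suc_ex[OF pos2] by blast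
    have un: "set (map Suc a) \<union> set (map Suc b) = {1..<Suc n}"
    proof -
      have "insert 0 (set (map Suc a) \<union> set (map Suc b)) = {0..<Suc n}"
        using Suc.prems(4) mu a b by simp
      moreover have "0 \<notin> set (map Suc a) \<union> set (map Suc b)" by auto
      ultimately show ?thesis by (rule ins0)
    qed
    have dis: "set (map Suc a) \<inter> set (map Suc b) = {}" using Suc.prems(3) mu a b by auto
    have sa: "sorted_wrt (<) (map Suc a)" using Suc.prems(1) mu a by simp
    have sb: "sorted_wrt (<) (map Suc b)" using Suc.prems(2) b by simp
    note sh = shift_shuffle[OF sa sb dis un]
    have jl: "j \<le> length b" using Suc.prems(6) b by simp
    have "fold sv mu j = fold sv (map Suc a) (Suc j)"
      using mu a Suc.prems(5) by (simp add: sv_def)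
    also have "\<dots> = Suc (fold sv a j)" by (rule fold_sv_Suc)
    also have "fold sv a j = b ! (j - 1) + 1"
      by (rule Suc.IH[OF sh Suc.prems(5) jl])
    finally show ?thesis using b Suc.prems(5) jl by simp
  next
    assume "0 \<in> set nu"
    then obtain nu' where nu: "nu = 0 # nu'"
      using Suc.prems(2) by (cases nu) auto
    have pos1: "\<forall>x\<in>set nu'. 0 < x" using Suc.prems(2) nu by auto
    have pos2: "\<forall>x\<in>set mu. 0 < x" using Suc.prems(3) nu by (auto intro: gr0I)
    obtain b where b: "nu' = map Suc b" using map_Suc_ex[OF pos1] by blast
    obtain a where a: "mu = map Suc a" using map_Suc_ex[OF pos2] by blast
    show ?thesis
    proof (cases "j = 1")
      case True
      have "fold sv mu 1 = 1" using pos2 by (intro fold_sv_fix) auto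
      then show ?thesis using True nu by simp
    next
      case False
      have un: "set (map Suc a) \<union> set (map Suc b) = {1..<Suc n}"
      proof -
        have "insert 0 (set (map Suc a) \<union> set (map Suc b)) = {0..<Suc n}"
          using Suc.prems(4) nu a b by simp
        moreover have "0 \<notin> set (map Suc a) \<union> set (map Suc b)" by auto
        ultimately show ?thesis by (rule ins0)
      qed
      have dis: "set (map Suc a) \<inter> set (map Suc b) = {}" using Suc.prems(3) nu a b by auto
      have sa: "sorted_wrt (<) (map Suc a)" using Suc.prems(1) a by simp
      have sb: "sorted_wrt (<) (map Suc b)" using Suc.prems(2) nu b by simp
      note sh = shift_shuffle[OF sa sb dis un]
      have j1: "1 \<le> j - 1" using False Suc.prems(5) by simp
      have jl: "j - 1 \<le> length b" using Suc.prems(6) nu b by simp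
      have "fold sv mu j = fold sv (map Suc a) (Suc (j - 1))"
        using a False Suc.prems(5) by (simp add: Suc_diff_1)
      also have "\<dots> = Suc (fold sv a (j - 1))" by (rule fold_sv_Suc)
      also have "fold sv a (j - 1) = b ! (j - 1 - 1) + 1"
        by (rule Suc.IH[OF sh j1 jl])
      finally show ?thesis using nu b j1 jl
        by (cases j) (auto simp: nth_Cons')
    qed
  qed
qed


lemma inj_nu_aux:
  assumes "distinct nu" "x \<in> {1..length nu}" "y \<in> {1..length nu}" "nu ! (x - 1) = nu ! (y - 1)"
  shows "x = y"
proof -
  have "x - 1 < length nu" "y - 1 < length nu" using assms by auto
  then have "x - 1 = y - 1" using nth_eq_iff_index_eq[OF assms(1)] assms(4) by blast
  then show ?thesis using assms by auto
qed

lemma omega_eq_refl: "omega_eq a a"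
  unfolding omega_eq_def dsq_ideal_def
  by (rule CollectI, rule exI[of _ "{}"], auto)

lemma key:
  assumes sh: "is_shuffle p q mu nu" and B: "B \<subseteq> {1..q}"
  shows "s_mu mu (\<Prod>i\<in>B. dY i) = (\<Prod>t\<in>(\<lambda>i. nu ! (i - 1)) ` B. dY (t + 1))"
proof -
  have fB: "finite B" using B finite_subset by blast
  have c: "\<And>i. i \<in> B \<Longrightarrow> fold sv mu i = nu ! (i - 1) + 1"
    using sh B unfolding is_shuffle_def by (intro comb) auto
  have d: "distinct nu" using sh unfolding is_shuffle_def by (simp add: strict_sorted_iff)
  have inj: "inj_on (\<lambda>i. nu ! (i - 1)) B"
  proof (rule inj_onI)
    fix x y assume xy: "x \<in> B" "y \<in> B" and e: "nu ! (x - 1) = nu ! (y - 1)"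
    have l: "length nu = q" using sh unfolding is_shuffle_def by simp
    have "x \<in> {1..q}" "y \<in> {1..q}" using xy B by auto
    then show "x = y" using e l d by (rule_tac inj_nu_aux) auto
  qed
  have "(\<Prod>i\<in>B. dY i) = (\<Prod>v\<in>DY ` B. Var v)" by (subst prod.reindex) (auto simp: inj_on_def)
  then have "s_mu mu (\<Prod>i\<in>B. dY i) = (\<Prod>v\<in>DY ` B. Var (fold svar mu v))"
    using fB by (simp add: s_mu_prod)
  also have "\<dots> = (\<Prod>i\<in>B. Var (DY (fold sv mu i)))"
    by (subst prod.reindex) (auto simp: inj_on_def fold_svar_DY)
  also have "\<dots> = (\<Prod>i\<in>B. dY (nu ! (i - 1) + 1))"
    by (rule prod.cong) (simp_all add: c)
  also have "\<dots> = (\<Prod>t\<in>(\<lambda>i. nu ! (i - 1)) ` B. dY (t + 1))"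
    using inj by (simp add: prod.reindex)
  finally show ?thesis .
qed

lemma img_nu:
  assumes sh: "is_shuffle p q mu nu"
  shows "(\<lambda>i. nu ! (i - 1)) ` {1..q} = set nu"
proof -
  have l: "length nu = q" using sh unfolding is_shuffle_def by simp
  show ?thesis
  proof
    show "(\<lambda>i. nu ! (i - 1)) ` {1..q} \<subseteq> set nu" using l by auto
    show "set nu \<subseteq> (\<lambda>i. nu ! (i - 1)) ` {1..q}"
    proof
      fix t assume "t \<in> set nu"
      then obtain k where k: "k < q" "t = nu ! k" using l by (auto simp: in_set_conv_nth)
      then have "Suc k \<in> {1..q}" "t = nu ! (Suc k - 1)" by auto
      then show "t \<in> (\<lambda>i. nu ! (i - 1)) ` {1..q}" by blast
    qed
  qed
qed

theorem lemma2p4: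
  fixes p q :: nat and mu nu :: "nat list"
  assumes "is_shuffle p q mu nu"
  shows "(\<forall>j\<in>{1..q}. s_mu mu (Var (Y j)) = Var (Y (nu ! (j - 1) + 1)))
       \<and> omega_eq (s_mu mu (omega q)) (\<Prod>t\<in>set nu. dY (t + 1))
       \<and> (\<forall>j\<in>{1..q}. omega_eq (s_mu mu (omega_hat q j))
                               (\<Prod>t\<in>set nu - {nu ! (j - 1)}. dY (t + 1)))"
proof (intro conjI ballI)
  fix j assume j: "j \<in> {1..q}"
  have "s_mu mu (Var (Y j)) = Var (fold svar mu (Y j))"
    using s_mu_prod[of "{Y j}" mu] by simp
  also have "\<dots> = Var (Y (nu ! (j - 1) + 1))"
    using assms j unfolding is_shuffle_def fold_svar_Y by (subst comb) auto
  finally show "s_mu mu (Var (Y j)) = Var (Y (nu ! (j - 1) + 1))" .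
next
  show "omega_eq (s_mu mu (omega q)) (\<Prod>t\<in>set nu. dY (t + 1))"
    unfolding omega_def key[OF assms order_refl] img_nu[OF assms] by (rule omega_eq_refl)
next
  fix j assume j: "j \<in> {1..q}"
  have d: "distinct nu" using assms unfolding is_shuffle_def by (simp add: strict_sorted_iff)
  have l: "length nu = q" using assms unfolding is_shuffle_def by simp
  have inj: "inj_on (\<lambda>i. nu ! (i - 1)) {1..q}"
  proof (rule inj_onI)
    fix x y assume "x \<in> {1..q}" "y \<in> {1..q}" "nu ! (x - 1) = nu ! (y - 1)"
    then show "x = y" using l d by (rule_tac inj_nu_aux) auto
  qed
  have "(\<lambda>i. nu ! (i - 1)) ` ({1..q} - {j}) = set nu - {nu ! (j - 1)}"
    using inj j by (simp add: inj_on_image_set_diff img_nu[OF assms, symmetric])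
  then show "omega_eq (s_mu mu (omega_hat q j)) (\<Prod>t\<in>set nu - {nu ! (j - 1)}. dY (t + 1))"
    unfolding omega_hat_def key[OF assms Diff_subset] by (simp add: omega_eq_refl)
qed

end
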